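(* Let $U$ be a representation of $\tilde W$ on which $z=-1$ acts by $-\mathrm{id}$, and let $\mathfrak u\in U$ satisfy $\tilde r_1\mathfrak u=\zeta_1^{\ell_1}\mathfrak u$ and $\tilde r_2\mathfrak u=\zeta_2^{\ell_2}\mathfrak u$, where $\ell_a\in\{1,\dots,2m_a-1\}$ are odd integers. Then for $a\in\{1,2\}$, \[ O_a^\pm\,\mathfrak u=\pm i\,Q_a(\ell_a\pm1)\,\tilde f_a\mathfrak u,\qquad O_a^\pm O_a^\mp\,\mathfrak u=Q_a(\ell_a\mp1)^2\,\mathfrak u. \]
   Context: Let $x_1,\dots,x_4$ be the standard orthonormal basis of $\mathbb R^4$, with complexification $V=\mathbb C^4$ and the bilinear extension $(\cdot,\cdot)$ of the standard inner product. Fix positive integers $m_1,m_2$ and $\zeta_a=e^{i\pi/m_a}$. Let $\alpha_p=(\sin(p\pi/m_1),-\cos(p\pi/m_1),0,0)$ ($p=1,\dots,2m_1$), $\beta_q=(0,0,\sin(q\pi/m_2),-\cos(q\pi/m_2))$ ($q=1,\dots,2m_2$), $R$ the set of these vectors, $R_+=\{\alpha_1,\dots,\alpha_{m_1},\beta_1,\dots,\beta_{m_2}\}$, and $W\cong D_{2m_1}\times D_{2m_2}$ the group generated by the reflections $s_\alpha$, $\alpha\in R$. Let $\kappa:R\to\mathbb R$ be $W$-invariant (real-valued, standing assumption). If $m_1$ is odd, $\kappa_1$ denotes the common value on all $\alpha_p$; if $m_1$ is even, $\kappa_1=\kappa_{\alpha_p}$ ($p$ odd), $\kappa_2=\kappa_{\alpha_p}$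 ($p$ even); similarly $\kappa_3$ (and $\kappa_4$ when $m_2$ is even) for the $\beta_q$. $Q_a(j)$ ($a\in\{1,2\}$, $j\in\mathbb Z$) equals $m_a\kappa_{2a-1}$ if $m_a$ odd and $j\equiv0\pmod{2m_a}$; $\frac{m_a}{2}(\kappa_{2a}+\kappa_{2a-1})$ if $m_a$ even and $j\equiv0\pmod{2m_a}$; $\frac{m_a}2(\kappa_{2a}-\kappa_{2a-1})$ if $m_a$ even and $j\equiv m_a\pmod{2m_a}$; $0$ otherwise. Let $\mathcal C$ be the complex Clifford algebra generated by $e_1,\dots,e_4$ with $e_je_k+e_ke_j=2\delta_{jk}$, $\gamma:V\to\mathcal C$ linear with $\gamma(x_j)=e_j$, and $\tilde W\subset\mathcal C^\times$ the group generated by all $\gamma(\alpha)$, $\alpha\in R$; $z=-1\in\tilde W$. Put $\tilde s_p=\gamma(\alpha_p)$, $\tilde t_q=\gamma(\beta_q)$, $\tilde f_1=\tilde s_{m_1}$, $\tilde f_2=\tilde t_{m_2}$, $\tilde r_1=z\tilde s_{m_1}\tilde s_1$, $\tilde r_2=z\tilde t_{m_2}\tilde t_1$. Let $z_a^\pm=x_{2a-1}\pm ix_{2a}$, and for $x\in V$ let $O(x)=\sum_{\alpha\in R_+}\kappa_\alpha(x,\alpha)\gamma(\alpha)\in\mathbb C\tilde W$ (this is the image of the one-index symmetry of the Dunkl total angular momentum algebra), acting on $U$; write $O_a^\pm=O(z_a^\pm)$. *)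

theory Defs
  imports Complex_Main
begin

text \<open>Vectors of V = C^4 are represented as functions nat => complex; the standard
basis vector x_(j+1) corresponds to index j, j < 4 (entries outside 0..3 are 0).\<close>

type_synonym vec4 = "nat \<Rightarrow> complex"

definition bil :: "vec4 \<Rightarrow> vec4 \<Rightarrow> complex" where
  "bil x y = (\<Sum>j<4. x j * y j)"

text \<open>Roots: rt 1 m p = alpha_p (coordinates x1,x2), rt 2 m q = beta_q (coordinates x3,x4).\<close>
definition rt :: "nat \<Rightarrow> nat \<Rightarrow> nat \<Rightarrow> vec4" where
  "rt a m p = (\<lambda>j. if j = 2*a - 2 then complex_of_real (sin (real p * pi / real m))
                   else if j = 2*a - 1 then complex_of_real (- cos (real p * pi / real m))
                   else 0)"

definition roots :: "nat \<Rightarrow> nat \<Rightarrow> vec4 set" where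
  "roots m1 m2 = {rt 1 m1 p | p. p \<in> {1..2*m1}} \<union> {rt 2 m2 q | q. q \<in> {1..2*m2}}"

definition refl :: "vec4 \<Rightarrow> vec4 \<Rightarrow> vec4" where
  "refl b v = (\<lambda>j. v j - 2 * bil v b / bil b b * b j)"

definition W_invariant :: "nat \<Rightarrow> nat \<Rightarrow> (vec4 \<Rightarrow> real) \<Rightarrow> bool" where
  "W_invariant m1 m2 \<kappa> \<longleftrightarrow> (\<forall>\<alpha>\<in>roots m1 m2. \<forall>\<beta>\<in>roots m1 m2. \<kappa> (refl \<beta> \<alpha>) = \<kappa> \<alpha>)"

text \<open>z_a^eps = x_(2a-1) + eps i x_(2a).\<close>
definition zv :: "nat \<Rightarrow> int \<Rightarrow> vec4" where
  "zv a \<epsilon> = (\<lambda>j. if j = 2*a - 2 then 1 else if j = 2*a - 1 then of_int \<epsilon> * \<i> else 0)"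

text \<open>Elements are coefficient functions on blades e_A, A a subset of {0..3}
(coefficients outside Pow {0..<4} are irrelevant and always 0 for the elements used).\<close>
type_synonym cl = "nat set \<Rightarrow> complex"

definition blade_sign :: "nat set \<Rightarrow> nat set \<Rightarrow> complex" where
  "blade_sign A B = (-1) ^ card {(a, b). a \<in> A \<and> b \<in> B \<and> b < a}"

definition clmul :: "cl \<Rightarrow> cl \<Rightarrow> cl" where
  "clmul x y = (\<lambda>C. \<Sum>A\<in>Pow {0..<4}. \<Sum>B\<in>Pow {0..<4}.
      if (A - B) \<union> (B - A) = C then blade_sign A B * x A * y B else 0)"

definition clone :: cl where
  "clone = (\<lambda>A. if A = {} then 1 else 0)"

definition clneg :: "cl \<Rightarrow> cl" where
  "clneg x = (\<lambda>A. - x A)"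

definition gam :: "vec4 \<Rightarrow> cl" where
  "gam v = (\<lambda>A. if \<exists>j<4. A = {j} then v (THE j. A = {j}) else 0)"

text \<open>The group W~ generated by gam(alpha), alpha in R. Since gam(alpha)^2 = 1, the
generated submonoid coincides with the generated group.\<close>
inductive_set Wt :: "nat \<Rightarrow> nat \<Rightarrow> cl set" for m1 m2 where
  Wt_one: "clone \<in> Wt m1 m2"
| Wt_gen: "g \<in> Wt m1 m2 \<Longrightarrow> \<alpha> \<in> roots m1 m2 \<Longrightarrow> clmul (gam \<alpha>) g \<in> Wt m1 m2"

text \<open>tilde f_a = gam(rt a m_a m_a); tilde r_a = z * gam(rt a m_a m_a) * gam(rt a m_a 1).\<close>
definition ft :: "nat \<Rightarrow> nat \<Rightarrow> cl" where
  "ft a m = gam (rt a m m)"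

definition rtil :: "nat \<Rightarrow> nat \<Rightarrow> cl" where
  "rtil a m = clneg (clmul (gam (rt a m m)) (gam (rt a m 1)))"

definition is_rep :: "(complex \<Rightarrow> 'u::ab_group_add \<Rightarrow> 'u) \<Rightarrow> cl set \<Rightarrow> (cl \<Rightarrow> 'u \<Rightarrow> 'u) \<Rightarrow> bool" where
  "is_rep sc G \<rho> \<longleftrightarrow> vector_space sc
     \<and> (\<forall>g\<in>G. Vector_Spaces.linear sc sc (\<rho> g))
     \<and> \<rho> clone = id
     \<and> (\<forall>g\<in>G. \<forall>h\<in>G. \<rho> (clmul g h) = \<rho> g \<circ> \<rho> h)"

definition Oop :: "(complex \<Rightarrow> 'u::ab_group_add \<Rightarrow> 'u) \<Rightarrow> (cl \<Rightarrow> 'u \<Rightarrow> 'u) \<Rightarrow> (vec4 \<Rightarrow> real)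
      \<Rightarrow> nat \<Rightarrow> nat \<Rightarrow> vec4 \<Rightarrow> 'u \<Rightarrow> 'u" where
  "Oop sc \<rho> \<kappa> m1 m2 x u =
     (\<Sum>p=1..m1. sc (complex_of_real (\<kappa> (rt 1 m1 p)) * bil x (rt 1 m1 p)) (\<rho> (gam (rt 1 m1 p)) u))
   + (\<Sum>q=1..m2. sc (complex_of_real (\<kappa> (rt 2 m2 q)) * bil x (rt 2 m2 q)) (\<rho> (gam (rt 2 m2 q)) u))"

text \<open>Q_a(j): k1 = kappa_(2a-1) (value on odd-indexed roots, = common value if m odd),
k2 = kappa_(2a) (value on even-indexed roots).\<close>
definition Qf :: "nat \<Rightarrow> real \<Rightarrow> real \<Rightarrow> int \<Rightarrow> real" where
  "Qf m k1 k2 j =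
     (if odd m then (if j mod (2 * int m) = 0 then real m * k1 else 0)
      else if j mod (2 * int m) = 0 then real m / 2 * (k2 + k1)
      else if j mod (2 * int m) = int m then real m / 2 * (k2 - k1)
      else 0)"

definition Qa :: "(vec4 \<Rightarrow> real) \<Rightarrow> nat \<Rightarrow> nat \<Rightarrow> int \<Rightarrow> real" where
  "Qa \<kappa> a m j = Qf m (\<kappa> (rt a m 1)) (\<kappa> (rt a m 2)) j"

end

theory Submission
  imports Defs
begin

definition S2 :: "nat \<Rightarrow> nat \<Rightarrow> nat set set" where "S2 i j = {{},{i},{j},{i,j}}"
definition supp2 :: "nat \<Rightarrow> nat \<Rightarrow> cl \<Rightarrow> bool" where
  "supp2 i j x \<longleftrightarrow> (\<forall>C. C \<notin> S2 i j \<longrightarrow> x C = 0)"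

lemma bs_empty1[simp]: "blade_sign {} B = 1" by (simp add: blade_sign_def)
lemma bs_empty2[simp]: "blade_sign A {} = 1" by (simp add: blade_sign_def)
lemma bs_ii: "blade_sign {i} {i} = 1"
proof -
  have e: "{(a, b). a \<in> {i} \<and> b \<in> {i} \<and> b < a} = {}"  by auto
  show ?thesis unfolding blade_sign_def e by simp
qed
lemma bs_ij: assumes "i < j" shows "blade_sign {i} {j} = 1"
proof -
  have e: "{(a, b). a \<in> {i} \<and> b \<in> {j} \<and> b < a} = {}" using assms by auto
  show ?thesis unfolding blade_sign_def e by simp
qed
lemma bs_ji: assumes "i < j" shows "blade_sign {j} {i} = -1"
proof -
  have e: "{(a, b). a \<in> {j} \<and> b \<in> {i} \<and> b < a} = {(j,i)}" using assms by auto
  show ?thesis unfolding blade_sign_def e by simp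
qed
lemma bs_i_ij: assumes "i < j" shows "blade_sign {i} {i,j} = 1"
proof -
  have e: "{(a, b). a \<in> {i} \<and> b \<in> {i,j} \<and> b < a} = {}" using assms by auto
  show ?thesis unfolding blade_sign_def e by simp
qed
lemma bs_j_ij: assumes "i < j" shows "blade_sign {j} {i,j} = -1"
proof -
  have e: "{(a, b). a \<in> {j} \<and> b \<in> {i,j} \<and> b < a} = {(j,i)}" using assms by auto
  show ?thesis unfolding blade_sign_def e by simp
qed
lemma bs_ij_i: assumes "i < j" shows "blade_sign {i,j} {i} = -1"
proof -
  have e: "{(a, b). a \<in> {i,j} \<and> b \<in> {i} \<and> b < a} = {(j,i)}" using assms by auto
  show ?thesis unfolding blade_sign_def e by simp
qed
lemma bs_ij_j: assumes "i < j" shows "blade_sign {i,j} {j} = 1"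
proof -
  have e: "{(a, b). a \<in> {i,j} \<and> b \<in> {j} \<and> b < a} = {}" using assms by auto
  show ?thesis unfolding blade_sign_def e by simp
qed
lemma bs_ij_ij: assumes "i < j" shows "blade_sign {i,j} {i,j} = -1"
proof -
  have e: "{(a, b). a \<in> {i,j} \<and> b \<in> {i,j} \<and> b < a} = {(j,i)}" using assms by auto
  show ?thesis unfolding blade_sign_def e by simp
qed

lemma clmul_S2:
  assumes ij: "i < j" "j < 4" and x: "supp2 i j x" and y: "supp2 i j y"
  shows "clmul x y C = (\<Sum>A\<in>S2 i j. \<Sum>B\<in>S2 i j.
      if (A - B) \<union> (B - A) = C then blade_sign A B * x A * y B else 0)"
proof -
  have sub: "S2 i j \<subseteq> Pow {0..<4}" using ij by (auto simp: S2_def)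
  have "clmul x y C = (\<Sum>A\<in>S2 i j. \<Sum>B\<in>Pow {0..<4}.
      if (A - B) \<union> (B - A) = C then blade_sign A B * x A * y B else 0)"
    unfolding clmul_def
    by (rule sum.mono_neutral_right[OF _ sub]) (use x in \<open>auto simp: supp2_def intro!: sum.neutral\<close>)
  also have "\<dots> = (\<Sum>A\<in>S2 i j. \<Sum>B\<in>S2 i j.
      if (A - B) \<union> (B - A) = C then blade_sign A B * x A * y B else 0)"
    by (rule sum.cong[OF refl], rule sum.mono_neutral_right[OF _ sub]) (use y in \<open>auto simp: supp2_def\<close>)
  finally show ?thesis .
qed

lemma clmul_2d:
  assumes ij: "i < j" "j < 4" and x: "supp2 i j x" and y: "supp2 i j y"
  shows "clmul x y C = (if C = {} then x {} * y {} + x {i} * y {i} + x {j} * y {j} - x {i,j} * y {i,j}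
     else if C = {i} then x {} * y {i} + x {i} * y {} - x {j} * y {i,j} + x {i,j} * y {j}
     else if C = {j} then x {} * y {j} + x {j} * y {} + x {i} * y {i,j} - x {i,j} * y {i}
     else if C = {i,j} then x {} * y {i,j} + x {i,j} * y {} + x {i} * y {j} - x {j} * y {i}
     else 0)"
proof -
  have ne: "i \<noteq> j" using ij by simp
  show ?thesis
    unfolding clmul_S2[OF assms] S2_def
    using ne by (simp add: bs_ii bs_ij bs_ji bs_i_ij bs_j_ij bs_ij_i bs_ij_j bs_ij_ij ij insert_Diff_if
        doubleton_eq_iff insert_commute)
qed

definition vw :: "nat \<Rightarrow> nat \<Rightarrow> real \<Rightarrow> vec4" where
  "vw i j \<theta> = (\<lambda>k. if k = i then complex_of_real (sin \<theta>) else if k = j then complex_of_real (- cos \<theta>) else 0)"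

definition Rr :: "nat \<Rightarrow> nat \<Rightarrow> real \<Rightarrow> cl" where
  "Rr i j \<phi> = (\<lambda>C. if C = {} then complex_of_real (cos \<phi>) else if C = {i,j} then complex_of_real (sin \<phi>) else 0)"

lemma gam_vw:
  assumes "i < j" "j < 4"
  shows "gam (vw i j \<theta>) = (\<lambda>C. if C = {i} then complex_of_real (sin \<theta>) else if C = {j} then complex_of_real (- cos \<theta>) else 0)"
proof
  fix C
  show "gam (vw i j \<theta>) C = (if C = {i} then complex_of_real (sin \<theta>) else if C = {j} then complex_of_real (- cos \<theta>) else 0)"
    using assms by (auto simp: gam_def vw_def)
qed

lemma supp_gam_vw: "i < j \<Longrightarrow> j < 4 \<Longrightarrow> supp2 i j (gam (vw i j \<theta>))"
  by (simp add: gam_vw supp2_def S2_def)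

lemma supp_Rr: "supp2 i j (Rr i j \<phi>)"
  by (simp add: Rr_def supp2_def S2_def)

lemma supp_clone: "supp2 i j clone"
  by (simp add: clone_def supp2_def S2_def)

lemma clmul_clone:
  assumes "i < j" "j < 4" "supp2 i j x" shows "clmul x clone = x"
proof
  fix C
  have ne: "i \<noteq> j" using assms by simp
  have x: "C \<notin> S2 i j \<Longrightarrow> x C = 0" using assms(3) by (simp add: supp2_def)
  show "clmul x clone C = x C"
    unfolding clmul_2d[OF assms(1,2,3) supp_clone] using ne x
    by (auto simp: clone_def S2_def)
qed

lemma sq_vw:
  assumes "i < j" "j < 4" shows "clmul (gam (vw i j \<theta>)) (gam (vw i j \<theta>)) = clone"
proof
  fix C
  have ne: "i \<noteq> j" using assms by simp
  have sc1: "(complex_of_real (sin \<theta>))^2 + (complex_of_real (cos \<theta>))^2 = 1"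
    by (simp flip: of_real_power of_real_add)
  show "clmul (gam (vw i j \<theta>)) (gam (vw i j \<theta>)) C = clone C"
    unfolding clmul_2d[OF assms supp_gam_vw[OF assms] supp_gam_vw[OF assms]]
    using ne sc1 by (auto simp: gam_vw[OF assms] clone_def power2_eq_square)
qed

lemma vw_R:
  assumes "i < j" "j < 4" shows "clmul (gam (vw i j \<theta>)) (Rr i j \<phi>) = gam (vw i j (\<theta> + \<phi>))"
proof
  fix C
  have ne: "i \<noteq> j" using assms by simp
  show "clmul (gam (vw i j \<theta>)) (Rr i j \<phi>) C = gam (vw i j (\<theta> + \<phi>)) C"
    unfolding clmul_2d[OF assms supp_gam_vw[OF assms] supp_Rr]
    using ne by (auto simp: gam_vw[OF assms] Rr_def sin_add cos_add simp flip: of_real_mult of_real_add of_real_diff)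
qed

lemma vw_vw_pi:
  assumes "i < j" "j < 4" shows "clneg (clmul (gam (vw i j pi)) (gam (vw i j \<psi>))) = Rr i j \<psi>"
proof
  fix C
  have ne: "i \<noteq> j" using assms by simp
  show "clneg (clmul (gam (vw i j pi)) (gam (vw i j \<psi>))) C = Rr i j \<psi> C"
    unfolding clneg_def clmul_2d[OF assms supp_gam_vw[OF assms] supp_gam_vw[OF assms]]
    using ne by (auto simp: gam_vw[OF assms] Rr_def)
qed

lemma vw_vw_2pi:
  assumes "i < j" "j < 4" shows "clmul (gam (vw i j (2*pi))) (gam (vw i j \<psi>)) = Rr i j \<psi>"
proof
  fix C
  have ne: "i \<noteq> j" using assms by simp
  show "clmul (gam (vw i j (2*pi))) (gam (vw i j \<psi>)) C = Rr i j \<psi> C"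
    unfolding clmul_2d[OF assms supp_gam_vw[OF assms] supp_gam_vw[OF assms]]
    using ne by (auto simp: gam_vw[OF assms] Rr_def)
qed

lemma vw_cong: "x = y \<Longrightarrow> vw i j x = vw i j y" by simp

lemma vw_period: "vw i j (x + 2 * pi * of_int k) = vw i j x"
proof -
  have h: "sin (x + 2 * pi * of_int k) = sin x" "cos (x + 2 * pi * of_int k) = cos x"
    using sin_add[of x "2*pi*of_int k"] cos_add[of x "2*pi*of_int k"] sin_int_2pin[of k] cos_int_2pin[of k]
    by simp_all
  show ?thesis unfolding vw_def h by (rule refl)
qed

lemma rt_vw: "rt a m p = vw (2*a-2) (2*a-1) (real p * pi / real m)"
  unfolding rt_def vw_def by (rule refl)

lemma bil_supp:
  assumes "i < 4" "j < 4" "i \<noteq> j" "\<And>k. k \<noteq> i \<Longrightarrow> k \<noteq> j \<Longrightarrow> u k = 0"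
  shows "bil u v = u i * v i + u j * v j"
proof -
  have "bil u v = (\<Sum>k\<in>{i,j}. u k * v k)"
    unfolding bil_def by (rule sum.mono_neutral_right) (use assms in auto)
  then show ?thesis using assms by simp
qed

lemma bil_vw: "i < j \<Longrightarrow> j < 4 \<Longrightarrow> bil (vw i j x) (vw i j y) = complex_of_real (cos (x - y))"
  by (subst bil_supp[of i j]) (auto simp: vw_def cos_diff simp flip: of_real_mult of_real_add)

lemma trig1: "sin \<theta> - 2 * cos (\<theta> - \<phi>) * sin \<phi> = sin (2*\<phi> - \<theta> + pi)"
proof -
  have h1: "sin (2*\<phi> - \<theta> + pi) = - (sin (2*\<phi>) * cos \<theta> - cos (2*\<phi>) * sin \<theta>)"
    by (simp add: sin_diff)
  have e: "(cos \<phi>)^2 + (sin \<phi>)^2 = 1" by simp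
  show ?thesis unfolding h1 sin_double cos_double cos_diff using e by algebra
qed

lemma trig2: "- cos \<theta> + 2 * cos (\<theta> - \<phi>) * cos \<phi> = - cos (2*\<phi> - \<theta> + pi)"
proof -
  have h1: "- cos (2*\<phi> - \<theta> + pi) = cos (2*\<phi>) * cos \<theta> + sin (2*\<phi>) * sin \<theta>"
    by (simp add: cos_diff)
  have e: "(cos \<phi>)^2 + (sin \<phi>)^2 = 1" by simp
  show ?thesis unfolding h1 sin_double cos_double cos_diff using e by algebra
qed

lemma refl_vw:
  assumes "i < j" "j < 4"
  shows "refl (vw i j \<phi>) (vw i j \<theta>) = vw i j (2*\<phi> - \<theta> + pi)"
proof
  fix k
  have 1: "bil (vw i j \<phi>) (vw i j \<phi>) = 1" using bil_vw[OF assms] by simp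
  have 2: "bil (vw i j \<theta>) (vw i j \<phi>) = complex_of_real (cos (\<theta> - \<phi>))" using bil_vw[OF assms] by simp
  show "refl (vw i j \<phi>) (vw i j \<theta>) k = vw i j (2*\<phi> - \<theta> + pi) k"
  proof (cases "k = i \<or> k = j")
    case True
    then show ?thesis
    proof
      assume k: "k = i"
      have "complex_of_real (sin \<theta>) - 2 * complex_of_real (cos (\<theta> - \<phi>)) / 1 * complex_of_real (sin \<phi>)
          = complex_of_real (sin \<theta> - 2 * cos (\<theta> - \<phi>) * sin \<phi>)" by simp
      then show ?thesis unfolding refl_def 1 2 trig1 using k by (simp add: vw_def)
    next
      assume k: "k = j"
      have "complex_of_real (- cos \<theta>) - 2 * complex_of_real (cos (\<theta> - \<phi>)) / 1 * complex_of_real (- cos \<phi>)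
          = complex_of_real (- cos \<theta> + 2 * cos (\<theta> - \<phi>) * cos \<phi>)" by simp
      then show ?thesis unfolding refl_def 1 2 trig2 using k assms by (simp add: vw_def)
    qed
  next
    case False
    then show ?thesis unfolding refl_def by (simp add: vw_def)
  qed
qed

lemma root_idx:
  assumes "0 < m"
  shows "\<exists>p\<in>{1..2*m}. vw i j (of_int n * pi / real m) = vw i j (real p * pi / real m)"
proof -
  define r where "r = n mod (2 * int m)"
  define q where "q = n div (2 * int m)"
  have nq: "n = 2 * int m * q + r" by (simp add: r_def q_def)
  have r0: "0 \<le> r" "r < 2 * int m" using assms by (simp_all add: r_def)
  have mne: "real m \<noteq> 0" using assms by simp
  show ?thesis
  proof (cases "r = 0")
    case True
    have e: "of_int n * pi / real m = real (2*m) * pi / real m + 2 * pi * of_int (q - 1)"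
      using nq True mne by (simp add: field_simps)
    have "vw i j (of_int n * pi / real m) = vw i j (real (2*m) * pi / real m)"
      unfolding e by (rule vw_period)
    moreover have "2 * m \<in> {1..2*m}" using assms by simp
    ultimately show ?thesis by blast
  next
    case False
    have e: "of_int n * pi / real m = real (nat r) * pi / real m + 2 * pi * of_int q"
      using nq r0 mne by (simp add: field_simps)
    have "vw i j (of_int n * pi / real m) = vw i j (real (nat r) * pi / real m)"
      unfolding e by (rule vw_period)
    moreover have "nat r \<in> {1..2*m}" using r0 False by auto
    ultimately show ?thesis by blast
  qed
qed

lemma kappa_step:
  assumes ij: "i < j" "j < 4" and m: "0 < m"
    and R: "\<And>n::int. vw i j (of_int n * pi / real m) \<in> R"
    and inv: "\<forall>\<alpha>\<in>R. \<forall>\<beta>\<in>R. \<kappa> (refl \<beta> \<alpha>) = \<kappa> \<alpha>"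
  shows "\<kappa> (vw i j (of_int (n+2) * pi / real m)) = \<kappa> (vw i j (of_int n * pi / real m))"
proof -
  have mne: "real m \<noteq> 0" using m by simp
  have B1: "vw i j pi \<in> R" using R[of "int m"] mne by simp
  have B2: "vw i j (of_int 1 * pi / real m) \<in> R" by (rule R)
  have A: "vw i j (of_int n * pi / real m) \<in> R" by (rule R)
  have A'R: "vw i j (of_int (3 * int m - n) * pi / real m) \<in> R" by (rule R)
  have A': "refl (vw i j pi) (vw i j (of_int n * pi / real m)) = vw i j (of_int (3 * int m - n) * pi / real m)"
    unfolding refl_vw[OF ij] using mne by (intro vw_cong) (simp add: field_simps)
  have "2 * (of_int 1 * pi / real m) - of_int (3 * int m - n) * pi / real m + pi
      = of_int (n+2) * pi / real m + 2 * pi * of_int (-1::int)"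
    using mne by (simp add: field_simps)
  then have A'': "refl (vw i j (of_int 1 * pi / real m)) (vw i j (of_int (3 * int m - n) * pi / real m))
      = vw i j (of_int (n+2) * pi / real m)"
    unfolding refl_vw[OF ij] by (simp only: vw_period)
  have "\<kappa> (vw i j (of_int n * pi / real m)) = \<kappa> (vw i j (of_int (3 * int m - n) * pi / real m))"
    using inv A B1 A' by metis
  also have "\<dots> = \<kappa> (vw i j (of_int (n+2) * pi / real m))"
    using inv A'R B2 A'' by metis
  finally show ?thesis by simp
qed

lemma kappa_even:
  assumes ij: "i < j" "j < 4" and m: "0 < m"
    and R: "\<And>n::int. vw i j (of_int n * pi / real m) \<in> R"
    and inv: "\<forall>\<alpha>\<in>R. \<forall>\<beta>\<in>R. \<kappa> (refl \<beta> \<alpha>) = \<kappa> \<alpha>"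
  shows "\<kappa> (vw i j (of_int (n + 2 * int k) * pi / real m)) = \<kappa> (vw i j (of_int n * pi / real m))"
proof (induction k)
  case 0 then show ?case by simp
next
  case (Suc k)
  have "\<kappa> (vw i j (of_int (n + 2 * int (Suc k)) * pi / real m)) = \<kappa> (vw i j (of_int ((n + 2 * int k) + 2) * pi / real m))"
    by (simp add: algebra_simps)
  also have "\<dots> = \<kappa> (vw i j (of_int (n + 2 * int k) * pi / real m))"
    by (rule kappa_step[OF ij m R inv])
  finally show ?case using Suc by simp
qed

lemma kappa_vals:
  assumes ij: "i < j" "j < 4" and m: "0 < m"
    and R: "\<And>n::int. vw i j (of_int n * pi / real m) \<in> R"
    and inv: "\<forall>\<alpha>\<in>R. \<forall>\<beta>\<in>R. \<kappa> (refl \<beta> \<alpha>) = \<kappa> \<alpha>"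
    and p: "1 \<le> p"
  shows "\<kappa> (vw i j (real p * pi / real m)) =
      (if odd p then \<kappa> (vw i j (real 1 * pi / real m)) else \<kappa> (vw i j (real 2 * pi / real m)))"
proof (cases "odd p")
  case True
  then obtain k where k: "p = 1 + 2 * k" by (metis oddE add.commute)
  have "\<kappa> (vw i j (of_int (1 + 2 * int k) * pi / real m)) = \<kappa> (vw i j (of_int 1 * pi / real m))"
    by (rule kappa_even[OF ij m R inv])
  then show ?thesis using True k by simp
next
  case False
  then obtain k' where "p = 2 * k'" by auto
  then have k: "p = 2 + 2 * (k' - 1)" using p by auto
  define k where "k = k' - 1"
  have k: "p = 2 + 2 * k" using k k_def by simp
  have "\<kappa> (vw i j (of_int (2 + 2 * int k) * pi / real m)) = \<kappa> (vw i j (of_int 2 * pi / real m))"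
    by (rule kappa_even[OF ij m R inv])
  then show ?thesis using False k by simp
qed

lemma kappa_odd_m:
  assumes ij: "i < j" "j < 4" and m: "0 < m"
    and R: "\<And>n::int. vw i j (of_int n * pi / real m) \<in> R"
    and inv: "\<forall>\<alpha>\<in>R. \<forall>\<beta>\<in>R. \<kappa> (refl \<beta> \<alpha>) = \<kappa> \<alpha>"
    and odd: "odd m"
  shows "\<kappa> (vw i j (real 2 * pi / real m)) = \<kappa> (vw i j (real 1 * pi / real m))"
proof -
  have mne: "real m \<noteq> 0" using m by simp
  obtain q where q: "m = 2 * q + 1" using odd by (metis oddE)
  have rm: "real m = 2 * real q + 1" using q by simp
  have l: "2 * (of_int (int q + 1) * pi / real m) - of_int 1 * pi / real m + pi = 2 * pi"
  proof -
    define x where "x = pi / real m"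
    have h: "(2*real q+1) * x = pi" using rm mne by (simp add: x_def)
    have "2 * (of_int (int q + 1) * pi / real m) - of_int 1 * pi / real m + pi = 2 * (real q + 1) * x - x + pi"
      by (simp add: x_def)
    also have "\<dots> = 2 * pi" using h by (simp add: algebra_simps)
    finally show ?thesis .
  qed
  have r: "of_int (2 + 2 * int (m - 1)) * pi / real m = 2 * pi"
    using m mne by (simp add: of_nat_diff)
  have "refl (vw i j (of_int (int q + 1) * pi / real m)) (vw i j (of_int 1 * pi / real m))
      = vw i j (of_int (2 + 2 * int (m - 1)) * pi / real m)"
    unfolding refl_vw[OF ij] l r ..
  moreover have "\<kappa> (vw i j (of_int (2 + 2 * int (m - 1)) * pi / real m)) = \<kappa> (vw i j (of_int 2 * pi / real m))"
    by (rule kappa_even[OF ij m R inv])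
  ultimately show ?thesis using inv R[of "int q + 1"] R[of 1] by (metis of_int_1 of_int_numeral of_nat_1 of_nat_numeral)
qed

lemma cis_int_2pi: "cis (2 * pi * of_int t) = 1"
  by (rule cis_multiple_2pi) simp

lemma om_eq_1_iff:
  assumes m: "0 < m"
  shows "cis (of_int j * pi / real m) = 1 \<longleftrightarrow> j mod (2 * int m) = 0"
proof
  assume h: "cis (of_int j * pi / real m) = 1"
  then have "cos (of_int j * pi / real m) = 1" by (metis cis.sel(1) one_complex.sel(1))
  then obtain n :: int where n: "of_int j * pi / real m = of_int n * 2 * pi" by (auto simp: cos_one_2pi_int)
  then have "of_int j = of_int n * 2 * real m" using m by (simp add: field_simps)
  then have "j = n * 2 * int m" by (metis of_int_eq_iff of_int_mult of_int_of_nat_eq of_int_numeral)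
  then show "j mod (2 * int m) = 0" by simp
next
  assume "j mod (2 * int m) = 0"
  then obtain t where t: "j = 2 * int m * t" by auto
  have "of_int j * pi / real m = 2 * pi * of_int t" using m t by (simp add: field_simps)
  then show "cis (of_int j * pi / real m) = 1" by (simp add: cis_int_2pi)
qed

lemma om_eq_m1:
  assumes m: "0 < m" and "j mod (2 * int m) = int m"
  shows "cis (of_int j * pi / real m) = -1"
proof -
  obtain t where t: "j = 2 * int m * t + int m" using assms(2) by (metis mult_div_mod_eq add.commute mult.commute)
  have "of_int j * pi / real m = 2 * pi * of_int t + pi" using m t by (simp add: field_simps)
  then show ?thesis by (simp add: cis_mult[symmetric] cis_int_2pi)
qed

lemma om_sq_1:
  assumes m: "0 < m" and h: "cis (of_int j * pi / real m) ^ 2 = 1"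
  shows "j mod (2 * int m) = 0 \<or> j mod (2 * int m) = int m"
proof -
  have "cis (of_int (2*j) * pi / real m) = 1" using h by (simp add: DeMoivre mult.assoc)
  then have "(2*j) mod (2 * int m) = 0" using om_eq_1_iff[OF m] by blast
  then obtain t where t: "j = int m * t" by (metis dvd_def dvd_mult_cancel_left mod_0_imp_dvd zero_neq_numeral mult_2)
  show ?thesis
  proof (cases "even t")
    case True then obtain s where "t = 2 * s" by auto
    then show ?thesis using t by simp
  next
    case False then obtain s where "t = 2 * s + 1" by (metis oddE)
    then have "j = 2 * int m * s + int m" using t by (simp add: algebra_simps)
    then show ?thesis using m by simp
  qed
qed

lemma sum_pairs: "(\<Sum>p=1..2*(n::nat). f p) = (\<Sum>q<n. f (2*q+1) + f (2*q+2))"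
proof (induction n)
  case 0 then show ?case by simp
next
  case (Suc n)
  have "{1..2 * Suc n} = insert (2*n+2) (insert (2*n+1) {1..2*n})" by auto
  then have "(\<Sum>p=1..2*Suc n. f p) = f (2*n+2) + (f (2*n+1) + (\<Sum>p=1..2*n. f p))" by simp
  then show ?case using Suc by (simp add: ac_simps)
qed

lemma char_sum:
  fixes k1 k2 :: real and j :: int
  assumes m: "0 < m" and je: "even j" and km: "odd m \<Longrightarrow> k2 = k1"
  shows "(\<Sum>p=1..m. complex_of_real (if odd p then k1 else k2) * cis (of_int j * pi / real m) ^ p)
       = complex_of_real (Qf m k1 k2 j)"
proof -
  define \<omega> where "\<omega> = cis (of_int j * pi / real m)"
  have om: "\<omega> ^ m = 1"
  proof -
    obtain t where t: "j = 2 * t" using je by auto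
    have "real m * (of_int j * pi / real m) = 2 * pi * of_int t" using m t by simp
    then show ?thesis by (simp add: \<omega>_def DeMoivre cis_int_2pi)
  qed
  show ?thesis
  proof (cases "odd m")
    case True
    have "(\<Sum>p=1..m. complex_of_real (if odd p then k1 else k2) * \<omega> ^ p) = of_real k1 * (\<Sum>p=1..m. \<omega> ^ p)"
      unfolding km[OF True] by (simp add: sum_distrib_left)
    also have "(\<Sum>p=1..m. \<omega> ^ p) = \<omega> * (\<Sum>p<m. \<omega> ^ p)"
    proof -
      have "(\<Sum>p=1..m. \<omega> ^ p) = (\<Sum>p<m. \<omega> ^ Suc p)"
        by (rule sum.reindex_bij_witness[where j="\<lambda>p. p - 1" and i=Suc]) auto
      then show ?thesis by (simp add: sum_distrib_left)
    qed
    finally have S: "(\<Sum>p=1..m. complex_of_real (if odd p then k1 else k2) * \<omega> ^ p) = of_real k1 * (\<omega> * (\<Sum>p<m. \<omega> ^ p))" .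
    show ?thesis
    proof (cases "\<omega> = 1")
      case True
      then have "j mod (2 * int m) = 0" using om_eq_1_iff[OF m] \<omega>_def by simp
      then show ?thesis using S True \<open>odd m\<close> by (simp add: Qf_def \<omega>_def[symmetric])
    next
      case False
      then have "j mod (2 * int m) \<noteq> 0" using om_eq_1_iff[OF m] \<omega>_def by simp
      moreover have "(\<Sum>p<m. \<omega> ^ p) = 0" using geometric_sum[OF False, of m] om by simp
      ultimately show ?thesis using S \<open>odd m\<close> by (simp add: Qf_def \<omega>_def[symmetric])
    qed
  next
    case False
    then obtain n where n: "m = 2 * n" by auto
    have "(\<Sum>p=1..m. complex_of_real (if odd p then k1 else k2) * \<omega> ^ p)
        = (\<Sum>q<n. (of_real k1 * \<omega> + of_real k2 * \<omega>^2) * (\<omega>^2) ^ q)"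
      unfolding n sum_pairs by (rule sum.cong) (auto simp: algebra_simps power_mult power_add power2_eq_square power_mult_distrib)
    also have "\<dots> = (of_real k1 * \<omega> + of_real k2 * \<omega>^2) * (\<Sum>q<n. (\<omega>^2) ^ q)"
      by (simp add: sum_distrib_left)
    finally have S: "(\<Sum>p=1..m. complex_of_real (if odd p then k1 else k2) * \<omega> ^ p)
        = (of_real k1 * \<omega> + of_real k2 * \<omega>^2) * (\<Sum>q<n. (\<omega>^2) ^ q)" .
    show ?thesis
    proof (cases "\<omega>^2 = 1")
      case True
      have sn: "(\<Sum>q<n. (\<omega>^2) ^ q) = of_nat n" using True by simp
      have mn: "real m / 2 = real n" using n by simp
      from om_sq_1[OF m True[unfolded \<omega>_def]]
      show ?thesis
      proof
        assume h: "j mod (2 * int m) = 0"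
        then have "\<omega> = 1" using om_eq_1_iff[OF m] \<omega>_def by simp
        then show ?thesis unfolding \<omega>_def[symmetric] S sn using h \<open>\<not> odd m\<close> mn by (simp add: Qf_def algebra_simps)
      next
        assume h: "j mod (2 * int m) = int m"
        then have h0: "j mod (2 * int m) \<noteq> 0" using m by simp
        have "\<omega> = -1" using om_eq_m1[OF m h] \<omega>_def by simp
        then show ?thesis unfolding \<omega>_def[symmetric] S sn using h h0 \<open>\<not> odd m\<close> mn by (simp add: Qf_def algebra_simps)
      qed
    next
      case False
      have "(\<omega>^2)^n = 1" using om n by (simp add: power_mult[symmetric])
      then have z: "(\<Sum>q<n. (\<omega>^2) ^ q) = 0" using geometric_sum[OF False, of n] by simp
      have h0: "j mod (2 * int m) \<noteq> 0"
      proof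
        assume "j mod (2 * int m) = 0"
        then have "\<omega> = 1" using om_eq_1_iff[OF m] \<omega>_def by simp
        then show False using False by simp
      qed
      have h1: "j mod (2 * int m) \<noteq> int m"
      proof
        assume "j mod (2 * int m) = int m"
        then have "\<omega> = -1" using om_eq_m1[OF m] \<omega>_def by simp
        then show False using False by simp
      qed
      show ?thesis unfolding \<omega>_def[symmetric] S z using h0 h1 \<open>\<not> odd m\<close> by (simp add: Qf_def)
    qed
  qed
qed

lemma lin_scale: "Vector_Spaces.linear sc sc f \<Longrightarrow> f (sc c x) = sc c (f x)"
  by (simp add: Vector_Spaces.linear_iff)

lemma cis_sum_eq: "a + b = c \<Longrightarrow> cis a * cis b = cis c"
  by (simp add: cis_mult)

lemma cis_l_pi: "odd l \<Longrightarrow> cis (real l * pi) = -1"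
  by (simp add: DeMoivre[symmetric])

lemma Qf_neg: "Qf m k1 k2 (- j) = Qf m k1 k2 j"
proof (cases "m = 0")
  case True then show ?thesis by (simp add: Qf_def)
next
  case False
  then have M: "0 < 2 * int m" by simp
  have r: "0 \<le> j mod (2 * int m)" "j mod (2 * int m) < 2 * int m" using M by simp_all
  have "(- j) mod (2 * int m) = (if j mod (2 * int m) = 0 then 0 else 2 * int m - j mod (2 * int m))"
    by (simp add: zmod_zminus1_eq_if)
  then have a: "(- j) mod (2 * int m) = 0 \<longleftrightarrow> j mod (2 * int m) = 0"
     and b: "(- j) mod (2 * int m) = int m \<longleftrightarrow> j mod (2 * int m) = int m" using r by auto
  show ?thesis unfolding Qf_def a b ..
qed

lemma rep_main:
  fixes sc :: "complex \<Rightarrow> 'u::ab_group_add \<Rightarrow> 'u" and \<rho> :: "cl \<Rightarrow> 'u \<Rightarrow> 'u"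
    and Op :: "int \<Rightarrow> 'u \<Rightarrow> 'u" and \<kappa> :: "nat \<Rightarrow> real" and l :: nat
  assumes ij: "i < j" "j < 4" and m: "0 < m" and l: "odd l"
   and V: "vector_space sc"
   and lin: "\<forall>g\<in>G. Vector_Spaces.linear sc sc (\<rho> g)"
   and rid: "\<rho> clone = id"
   and hom: "\<forall>g\<in>G. \<forall>h\<in>G. \<rho> (clmul g h) = \<rho> g \<circ> \<rho> h"
   and sG: "\<And>p::nat. gam (vw i j (real p * pi / real m)) \<in> G"
   and rG: "Rr i j (pi / real m) \<in> G"
   and ru: "\<rho> (Rr i j (pi / real m)) u = sc (cis (real l * pi / real m)) u"
   and kap: "\<And>p. 1 \<le> p \<Longrightarrow> \<kappa> p = (if odd p then k1 else k2)"
   and km: "odd m \<Longrightarrow> k2 = k1"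
   and Oeq: "\<And>e v. e \<in> {1,-1} \<Longrightarrow> Op e v = (\<Sum>p=1..m. sc (complex_of_real (\<kappa> p) *
        (- (of_int e * \<i>) * cis (of_int e * (real p * pi / real m)))) (\<rho> (gam (vw i j (real p * pi / real m))) v))"
   and e: "e \<in> {1,-1}"
  shows "Op e u = sc (of_int e * \<i> * complex_of_real (Qf m k1 k2 (int l + e))) (\<rho> (gam (vw i j (real m * pi / real m))) u)
     \<and> Op e (Op (-e) u) = sc (complex_of_real ((Qf m k1 k2 (int l - e))^2)) u"
proof -
  interpret V: vector_space sc by (rule V)
  define s where "s p = gam (vw i j (real p * pi / real m))" for p
  define f where "f = \<rho> (s m) u"
  have mne: "real m \<noteq> 0" using m by simp
  have sG': "s p \<in> G" for p unfolding s_def by (rule sG)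
  have sc_lin: "\<rho> (s p) (sc c x) = sc c (\<rho> (s p) x)" for p c x
    using lin sG' lin_scale by blast
  have step: "\<rho> (s (Suc p)) u = sc (cis (real l * pi / real m)) (\<rho> (s p) u)" for p
  proof -
    have "s (Suc p) = clmul (s p) (Rr i j (pi / real m))"
      unfolding s_def vw_R[OF ij] by (rule arg_cong[where f="\<lambda>x. gam (vw i j x)"]) (simp add: add_divide_distrib algebra_simps)
    then have "\<rho> (s (Suc p)) u = \<rho> (s p) (\<rho> (Rr i j (pi / real m)) u)" using hom sG' rG by simp
    then show ?thesis using ru sc_lin by simp
  qed
  have iter: "\<rho> (s (p + k)) u = sc (cis (real l * real k * pi / real m)) (\<rho> (s p) u)" for p k
  proof (induction k)
    case 0 then show ?case by simp
  next
    case (Suc k)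
    have "\<rho> (s (p + Suc k)) u = sc (cis (real l * pi / real m)) (\<rho> (s (p + k)) u)" using step by simp
    also have "\<dots> = sc (cis (real l * pi / real m) * cis (real l * real k * pi / real m)) (\<rho> (s p) u)"
      using Suc by simp
    also have "cis (real l * pi / real m) * cis (real l * real k * pi / real m) = cis (real l * real (Suc k) * pi / real m)"
      by (rule cis_sum_eq) (simp add: add_divide_distrib algebra_simps)
    finally show ?case .
  qed
  have P2: "\<rho> (s p) u = sc (- cis (real l * real p * pi / real m)) f" if "p \<le> m" for p
  proof -
    have "f = sc (cis (real l * real (m - p) * pi / real m)) (\<rho> (s p) u)"
      unfolding f_def using iter[of p "m - p"] that by simp
    then have "sc (- cis (real l * real p * pi / real m)) f
        = sc (- (cis (real l * real p * pi / real m) * cis (real l * real (m - p) * pi / real m))) (\<rho> (s p) u)"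
      by simp
    also have "cis (real l * real p * pi / real m) * cis (real l * real (m - p) * pi / real m) = cis (real l * pi)"
      by (rule cis_sum_eq) (use that mne in \<open>simp add: of_nat_diff field_simps\<close>)
    finally show ?thesis using cis_l_pi[OF l] by simp
  qed
  have P3: "\<rho> (s p) f = sc (- cis (- (real l * real p * pi / real m))) u" if "p \<le> m" for p
  proof -
    have "sc (- cis (- (real l * real p * pi / real m))) (\<rho> (s p) u)
        = sc (cis (- (real l * real p * pi / real m)) * cis (real l * real p * pi / real m)) f"
      using P2[OF that] by simp
    also have "cis (- (real l * real p * pi / real m)) * cis (real l * real p * pi / real m) = 1"
      by (simp add: cis_mult)
    finally have ff: "f = sc (- cis (- (real l * real p * pi / real m))) (\<rho> (s p) u)" by simp
    have h: "\<rho> (s p) (\<rho> (s p) u) = u"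
      using hom sG' rid sq_vw[OF ij] unfolding s_def by (metis comp_apply id_apply)
    show ?thesis by (subst ff) (simp only: sc_lin h)
  qed
  have Oeq': "Op e' v = (\<Sum>p=1..m. sc (complex_of_real (\<kappa> p) *
        (- (of_int e' * \<i>) * cis (of_int e' * (real p * pi / real m)))) (\<rho> (s p) v))" if "e' \<in> {1,-1}" for e' v
    unfolding s_def by (rule Oeq[OF that])
  have Oscale: "Op e' (sc c v) = sc c (Op e' v)" if "e' \<in> {1,-1}" for e' c v
    unfolding Oeq'[OF that] by (simp add: sc_lin V.scale_sum_right mult.commute)
  have even1: "even (int l + e')" "even (e' - int l)" if "e' \<in> {1,-1}" for e'
    using that l by auto
  have first: "Op e' u = sc (of_int e' * \<i> * complex_of_real (Qf m k1 k2 (int l + e'))) f" if e': "e' \<in> {1,-1}" for e'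
  proof -
    have "Op e' u = (\<Sum>p=1..m. sc (of_int e' * \<i> * (complex_of_real (if odd p then k1 else k2) *
         cis (of_int (int l + e') * pi / real m) ^ p)) f)"
      unfolding Oeq'[OF e']
    proof (rule sum.cong[OF refl])
      fix p assume p: "p \<in> {1..m}"
      have c: "cis (of_int e' * (real p * pi / real m)) * cis (real l * real p * pi / real m) = cis (of_int (int l + e') * pi / real m) ^ p"
        unfolding DeMoivre by (rule cis_sum_eq) (use mne in \<open>simp add: field_simps\<close>)
      have "sc (complex_of_real (\<kappa> p) * (- (of_int e' * \<i>) * cis (of_int e' * (real p * pi / real m)))) (\<rho> (s p) u)
          = sc (complex_of_real (\<kappa> p) * (of_int e' * \<i>) * (cis (of_int e' * (real p * pi / real m)) * cis (real l * real p * pi / real m))) f"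
        using p by (simp add: P2)
      also have "\<dots> = sc (of_int e' * \<i> * (complex_of_real (if odd p then k1 else k2) *
         cis (of_int (int l + e') * pi / real m) ^ p)) f"
        unfolding c using p kap[of p] by (simp add: algebra_simps)
      finally show "sc (complex_of_real (\<kappa> p) * (- (of_int e' * \<i>) * cis (of_int e' * (real p * pi / real m)))) (\<rho> (s p) u)
          = sc (of_int e' * \<i> * (complex_of_real (if odd p then k1 else k2) *
         cis (of_int (int l + e') * pi / real m) ^ p)) f" .
    qed
    also have "\<dots> = sc (of_int e' * \<i> * (\<Sum>p=1..m. complex_of_real (if odd p then k1 else k2) *
         cis (of_int (int l + e') * pi / real m) ^ p)) f"
      by (simp add: V.scale_sum_left sum_distrib_left)
    also have "\<dots> = sc (of_int e' * \<i> * complex_of_real (Qf m k1 k2 (int l + e'))) f"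
      by (subst char_sum[OF m even1(1)[OF e'] km]) simp_all
    finally show ?thesis .
  qed
  have second: "Op e' f = sc (of_int e' * \<i> * complex_of_real (Qf m k1 k2 (int l - e'))) u" if e': "e' \<in> {1,-1}" for e'
  proof -
    have "Op e' f = (\<Sum>p=1..m. sc (of_int e' * \<i> * (complex_of_real (if odd p then k1 else k2) *
         cis (of_int (e' - int l) * pi / real m) ^ p)) u)"
      unfolding Oeq'[OF e']
    proof (rule sum.cong[OF refl])
      fix p assume p: "p \<in> {1..m}"
      have c: "cis (of_int e' * (real p * pi / real m)) * cis (- (real l * real p * pi / real m)) = cis (of_int (e' - int l) * pi / real m) ^ p"
        unfolding DeMoivre by (rule cis_sum_eq) (use mne in \<open>simp add: field_simps\<close>)
      have "sc (complex_of_real (\<kappa> p) * (- (of_int e' * \<i>) * cis (of_int e' * (real p * pi / real m)))) (\<rho> (s p) f)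
          = sc (complex_of_real (\<kappa> p) * (of_int e' * \<i>) * (cis (of_int e' * (real p * pi / real m)) * cis (- (real l * real p * pi / real m)))) u"
        using p by (simp add: P3)
      also have "\<dots> = sc (of_int e' * \<i> * (complex_of_real (if odd p then k1 else k2) *
         cis (of_int (e' - int l) * pi / real m) ^ p)) u"
        unfolding c using p kap[of p] by (simp add: algebra_simps)
      finally show "sc (complex_of_real (\<kappa> p) * (- (of_int e' * \<i>) * cis (of_int e' * (real p * pi / real m)))) (\<rho> (s p) f)
          = sc (of_int e' * \<i> * (complex_of_real (if odd p then k1 else k2) *
         cis (of_int (e' - int l) * pi / real m) ^ p)) u" .
    qed
    also have "\<dots> = sc (of_int e' * \<i> * (\<Sum>p=1..m. complex_of_real (if odd p then k1 else k2) *
         cis (of_int (e' - int l) * pi / real m) ^ p)) u"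
      by (simp add: V.scale_sum_left sum_distrib_left)
    also have "\<dots> = sc (of_int e' * \<i> * complex_of_real (Qf m k1 k2 (e' - int l))) u"
      by (subst char_sum[OF m even1(2)[OF e'] km]) simp_all
    also have "Qf m k1 k2 (e' - int l) = Qf m k1 k2 (int l - e')"
      using Qf_neg[of m k1 k2 "int l - e'"] by simp
    finally show ?thesis .
  qed
  have me: "- e \<in> {1,-1}" using e by auto
  have "Op e (Op (-e) u) = Op e (sc (of_int (-e) * \<i> * complex_of_real (Qf m k1 k2 (int l - e))) f)"
    using first[OF me] by simp
  also have "\<dots> = sc (of_int (-e) * \<i> * complex_of_real (Qf m k1 k2 (int l - e))) (Op e f)"
    by (rule Oscale[OF e])
  also have "\<dots> = sc ((of_int (-e) * \<i> * complex_of_real (Qf m k1 k2 (int l - e))) *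
      (of_int e * \<i> * complex_of_real (Qf m k1 k2 (int l - e)))) u"
    using second[OF e] by simp
  also have "(of_int (-e) * \<i> * complex_of_real (Qf m k1 k2 (int l - e))) *
      (of_int e * \<i> * complex_of_real (Qf m k1 k2 (int l - e))) = complex_of_real ((Qf m k1 k2 (int l - e))^2)"
    using e by (auto simp: power2_eq_square mult_ac)
  finally show ?thesis using first[OF e] unfolding f_def s_def by simp
qed

lemma bil_zv_vw:
  assumes a: "i = 2*a-2" "j = 2*a-1" "i < j" "j < 4" and e: "e \<in> {1,-1}"
  shows "bil (zv a e) (vw i j \<theta>) = - (of_int e * \<i>) * cis (of_int e * \<theta>)"
proof -
  have "bil (zv a e) (vw i j \<theta>) = zv a e i * vw i j \<theta> i + zv a e j * vw i j \<theta> j"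
    by (rule bil_supp) (use a in \<open>auto simp: zv_def\<close>)
  also have "\<dots> = complex_of_real (sin \<theta>) + of_int e * \<i> * complex_of_real (- cos \<theta>)"
    using a by (simp add: zv_def vw_def)
  finally show ?thesis using e by (auto simp: complex_eq_iff)
qed

lemma final_gen:
  fixes sc :: "complex \<Rightarrow> 'u::ab_group_add \<Rightarrow> 'u" and \<rho> :: "cl \<Rightarrow> 'u \<Rightarrow> 'u"
    and Op :: "int \<Rightarrow> 'u \<Rightarrow> 'u" and \<kappa> :: "vec4 \<Rightarrow> real" and l :: nat
  assumes a: "i = 2*a-2" "j = 2*a-1" "i < j" "j < 4" and m: "0 < m" and l: "odd l"
   and V: "vector_space sc"
   and lin: "\<forall>g\<in>G. Vector_Spaces.linear sc sc (\<rho> g)"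
   and rid: "\<rho> clone = id"
   and hom: "\<forall>g\<in>G. \<forall>h\<in>G. \<rho> (clmul g h) = \<rho> g \<circ> \<rho> h"
   and G1: "clone \<in> G" and G2: "\<And>g \<alpha>. g \<in> G \<Longrightarrow> \<alpha> \<in> R \<Longrightarrow> clmul (gam \<alpha>) g \<in> G"
   and RR: "\<And>p. p \<in> {1..2*m} \<Longrightarrow> rt a m p \<in> R"
   and inv: "\<forall>\<alpha>\<in>R. \<forall>\<beta>\<in>R. \<kappa> (refl \<beta> \<alpha>) = \<kappa> \<alpha>"
   and ru: "\<rho> (rtil a m) u = sc (exp (\<i> * pi / of_nat m) ^ l) u"
   and Oeq: "\<And>e v. e \<in> {1,-1} \<Longrightarrow> Op e v = (\<Sum>p=1..m. sc (complex_of_real (\<kappa> (rt a m p)) * bil (zv a e) (rt a m p)) (\<rho> (gam (rt a m p)) v))"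
   and e: "e \<in> {1,-1}"
  shows "Op e u = sc (of_int e * \<i> * complex_of_real (Qa \<kappa> a m (int l + e))) (\<rho> (ft a m) u)
     \<and> Op e (Op (-e) u) = sc (complex_of_real ((Qa \<kappa> a m (int l - e))^2)) u"
proof -
  have ij: "i < j" "j < 4" using a by auto
  have mne: "real m \<noteq> 0" using m by simp
  have rtv: "rt a m p = vw i j (real p * pi / real m)" for p using a rt_vw by simp
  have R': "vw i j (of_int n * pi / real m) \<in> R" for n :: int
    using root_idx[OF m, of i j n] RR rtv by force
  have gamG: "gam (vw i j \<theta>) \<in> G" if "vw i j \<theta> \<in> R" for \<theta>
    using G2[OF G1 that] clmul_clone[OF ij supp_gam_vw[OF ij]] by simp
  have sG: "gam (vw i j (real p * pi / real m)) \<in> G" for p :: nat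
    using gamG R'[of "int p"] by simp
  have R2pi: "vw i j (2 * pi) \<in> R" using R'[of "2 * int m"] mne by simp
  have Rpim: "vw i j (pi / real m) \<in> R" using R'[of 1] by simp
  have "Rr i j (pi / real m) = clmul (gam (vw i j (2*pi))) (clmul (gam (vw i j (pi / real m))) clone)"
    using vw_vw_2pi[OF ij] clmul_clone[OF ij supp_gam_vw[OF ij]] by simp
  then have rG: "Rr i j (pi / real m) \<in> G" using G2[OF G2[OF G1 Rpim] R2pi] by simp
  have rt_eq: "rtil a m = Rr i j (pi / real m)"
    unfolding rtil_def rtv using mne vw_vw_pi[OF ij] by simp
  have ex: "exp (\<i> * pi / of_nat m) ^ l = cis (real l * pi / real m)"
  proof -
    have "exp (\<i> * pi / of_nat m) = cis (pi / real m)" by (simp add: cis_conv_exp)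
    then show ?thesis by (simp add: DeMoivre)
  qed
  have ru': "\<rho> (Rr i j (pi / real m)) u = sc (cis (real l * pi / real m)) u"
    using ru unfolding rt_eq ex .
  have kap: "\<kappa> (rt a m p) = (if odd p then \<kappa> (rt a m 1) else \<kappa> (rt a m 2))" if "1 \<le> p" for p
    unfolding rtv using kappa_vals[OF ij m R' inv that] by simp
  have km: "odd m \<Longrightarrow> \<kappa> (rt a m 2) = \<kappa> (rt a m 1)"
    unfolding rtv using kappa_odd_m[OF ij m R' inv] by simp
  have Oeq': "Op e v = (\<Sum>p=1..m. sc (complex_of_real (\<kappa> (rt a m p)) *
        (- (of_int e * \<i>) * cis (of_int e * (real p * pi / real m)))) (\<rho> (gam (vw i j (real p * pi / real m))) v))"
    if "e \<in> {1,-1}" for e v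
    unfolding Oeq[OF that] rtv bil_zv_vw[OF a that] ..
  have "Op e u = sc (of_int e * \<i> * complex_of_real (Qf m (\<kappa> (rt a m 1)) (\<kappa> (rt a m 2)) (int l + e))) (\<rho> (gam (vw i j (real m * pi / real m))) u)
     \<and> Op e (Op (-e) u) = sc (complex_of_real ((Qf m (\<kappa> (rt a m 1)) (\<kappa> (rt a m 2)) (int l - e))^2)) u"
    by (rule rep_main[where \<kappa>="\<lambda>p. \<kappa> (rt a m p)", OF ij m l V lin rid hom sG rG ru' kap km Oeq' e])
  then show ?thesis unfolding Qa_def ft_def rtv .
qed

lemma bil_zv_other1: "bil (zv 1 e) (rt 2 m q) = 0"
  by (subst bil_supp[of 0 1]) (auto simp: zv_def rt_def)

lemma bil_zv_other2: "bil (zv 2 e) (rt 1 m q) = 0"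
  by (subst bil_supp[of 2 3]) (auto simp: zv_def rt_def)

theorem lemma5p5:
  fixes m1 m2 l1 l2 :: nat
    and \<kappa> :: "vec4 \<Rightarrow> real"
    and sc :: "complex \<Rightarrow> 'u::ab_group_add \<Rightarrow> 'u"
    and \<rho> :: "cl \<Rightarrow> 'u \<Rightarrow> 'u"
    and uu :: 'u
  assumes "0 < m1" and "0 < m2"
    and "W_invariant m1 m2 \<kappa>"
    and "is_rep sc (Wt m1 m2) \<rho>"
    and "\<forall>v. \<rho> (clneg clone) v = - v"
    and "odd l1" and "1 \<le> l1" and "l1 \<le> 2 * m1 - 1"
    and "odd l2" and "1 \<le> l2" and "l2 \<le> 2 * m2 - 1"
    and "\<rho> (rtil 1 m1) uu = sc (exp (\<i> * pi / of_nat m1) ^ l1) uu"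
    and "\<rho> (rtil 2 m2) uu = sc (exp (\<i> * pi / of_nat m2) ^ l2) uu"
  shows "\<forall>a\<in>{1::nat, 2}. \<forall>\<epsilon>\<in>{1::int, -1}.
           (let m = (if a = 1 then m1 else m2); l = (if a = 1 then l1 else l2) in
              Oop sc \<rho> \<kappa> m1 m2 (zv a \<epsilon>) uu
                = sc (of_int \<epsilon> * \<i> * complex_of_real (Qa \<kappa> a m (int l + \<epsilon>))) (\<rho> (ft a m) uu)
            \<and> Oop sc \<rho> \<kappa> m1 m2 (zv a \<epsilon>) (Oop sc \<rho> \<kappa> m1 m2 (zv a (- \<epsilon>)) uu)
                = sc (complex_of_real ((Qa \<kappa> a m (int l - \<epsilon>))\<^sup>2)) uu)"
proof -
  note A = assms
  have V: "vector_space sc" and lin: "\<forall>g\<in>Wt m1 m2. Vector_Spaces.linear sc sc (\<rho> g)"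
    and rid: "\<rho> clone = id" and hom: "\<forall>g\<in>Wt m1 m2. \<forall>h\<in>Wt m1 m2. \<rho> (clmul g h) = \<rho> g \<circ> \<rho> h"
    using A(4) unfolding is_rep_def by auto
  interpret V: vector_space sc by (rule V)
  have inv: "\<forall>\<alpha>\<in>roots m1 m2. \<forall>\<beta>\<in>roots m1 m2. \<kappa> (refl \<beta> \<alpha>) = \<kappa> \<alpha>"
    using A(3) unfolding W_invariant_def by auto
  have G2: "\<And>g \<alpha>. g \<in> Wt m1 m2 \<Longrightarrow> \<alpha> \<in> roots m1 m2 \<Longrightarrow> clmul (gam \<alpha>) g \<in> Wt m1 m2"
    by (rule Wt_gen)
  have RR1: "\<And>p. p \<in> {1..2*m1} \<Longrightarrow> rt 1 m1 p \<in> roots m1 m2" unfolding roots_def by blast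
  have RR2: "\<And>p. p \<in> {1..2*m2} \<Longrightarrow> rt 2 m2 p \<in> roots m1 m2" unfolding roots_def by blast
  have O1: "Oop sc \<rho> \<kappa> m1 m2 (zv 1 e) v = (\<Sum>p=1..m1. sc (complex_of_real (\<kappa> (rt 1 m1 p)) * bil (zv 1 e) (rt 1 m1 p)) (\<rho> (gam (rt 1 m1 p)) v))"
    if "e \<in> {1,-1}" for e v
    unfolding Oop_def bil_zv_other1 by simp
  have O2: "Oop sc \<rho> \<kappa> m1 m2 (zv 2 e) v = (\<Sum>p=1..m2. sc (complex_of_real (\<kappa> (rt 2 m2 p)) * bil (zv 2 e) (rt 2 m2 p)) (\<rho> (gam (rt 2 m2 p)) v))"
    if "e \<in> {1,-1}" for e v
    unfolding Oop_def bil_zv_other2 by simp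
  have F1: "Oop sc \<rho> \<kappa> m1 m2 (zv 1 e) uu = sc (of_int e * \<i> * complex_of_real (Qa \<kappa> 1 m1 (int l1 + e))) (\<rho> (ft 1 m1) uu)
     \<and> Oop sc \<rho> \<kappa> m1 m2 (zv 1 e) (Oop sc \<rho> \<kappa> m1 m2 (zv 1 (-e)) uu) = sc (complex_of_real ((Qa \<kappa> 1 m1 (int l1 - e))^2)) uu"
    if e: "e \<in> {1,-1}" for e
    by (rule final_gen[where Op="\<lambda>e v. Oop sc \<rho> \<kappa> m1 m2 (zv 1 e) v" and i=0 and j=1 and a=1 and m=m1 and l=l1, OF _ _ _ _ A(1) A(6) V lin rid hom Wt_one G2 RR1 inv A(12) O1 e]) auto
  have F2: "Oop sc \<rho> \<kappa> m1 m2 (zv 2 e) uu = sc (of_int e * \<i> * complex_of_real (Qa \<kappa> 2 m2 (int l2 + e))) (\<rho> (ft 2 m2) uu)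
     \<and> Oop sc \<rho> \<kappa> m1 m2 (zv 2 e) (Oop sc \<rho> \<kappa> m1 m2 (zv 2 (-e)) uu) = sc (complex_of_real ((Qa \<kappa> 2 m2 (int l2 - e))^2)) uu"
    if e: "e \<in> {1,-1}" for e
    by (rule final_gen[where Op="\<lambda>e v. Oop sc \<rho> \<kappa> m1 m2 (zv 2 e) v" and i=2 and j=3 and a=2 and m=m2 and l=l2, OF _ _ _ _ A(2) A(9) V lin rid hom Wt_one G2 RR2 inv A(13) O2 e]) auto
  show ?thesis
  proof (intro ballI)
    fix a e assume a: "a \<in> {1::nat, 2}" and e: "e \<in> {1::int, -1}"
    show "let m = (if a = 1 then m1 else m2); l = (if a = 1 then l1 else l2) in
              Oop sc \<rho> \<kappa> m1 m2 (zv a e) uu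
                = sc (of_int e * \<i> * complex_of_real (Qa \<kappa> a m (int l + e))) (\<rho> (ft a m) uu)
            \<and> Oop sc \<rho> \<kappa> m1 m2 (zv a e) (Oop sc \<rho> \<kappa> m1 m2 (zv a (- e)) uu)
                = sc (complex_of_real ((Qa \<kappa> a m (int l - e))\<^sup>2)) uu"
      using a F1[OF e] F2[OF e] by (auto simp: Let_def)
  qed
qed

end
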